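(* Let $n\ge1$ and $1\le p\le n$. A configuration $C\in\mathcal{S}(n,p)$ is $p$-toppleable if and only if for every $1\le i\le n+1$, $p+i-n-1\le C^{-1}(i)\le p+i-1$, where $C^{-1}(i)$ is the site of chip $i$ in $C$.
   Context: Sites are $0,\dots,n+1$. A configuration in $\mathcal{S}(n,p)$ places $n+1$ distinct chips labeled $1,\dots,n+1$ with sites $0,n+1$ empty, one chip at each site of $\{1,\dots,n\}\setminus\{p\}$ and two chips at site $p$. Toppling: while some site holds at least two chips, choose such a site $i$ and two chips $\alpha<\beta$ there and move $\alpha$ to $i-1$, $\beta$ to $i+1$. It is known this terminates with at most one chip per site within sites $0,\dots,n+1$, and the final configuration is independent of the choices. $C$ is $p$-toppleable if reading the labels of the final configuration from left to right gives $1,2,\dots,n+1$ in increasing order. *)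

theory Defs
  imports Main
begin

text \<open>A configuration assigns to each chip c in {1..n+1} its site C c (an integer).
  Values of C outside the chips {1..n+1} are irrelevant.\<close>

definition in_S :: "nat \<Rightarrow> nat \<Rightarrow> (nat \<Rightarrow> int) \<Rightarrow> bool" where
  "in_S n p C \<longleftrightarrow>
     (\<forall>c\<in>{1..n+1}. C c \<in> {1..int n}) \<and>
     (\<forall>s\<in>{1..n}. card {c\<in>{1..n+1}. C c = int s} = (if s = p then 2 else 1))"

definition topple_step :: "nat \<Rightarrow> (nat \<Rightarrow> int) \<Rightarrow> (nat \<Rightarrow> int) \<Rightarrow> bool" where
  "topple_step n C C' \<longleftrightarrow>
     (\<exists>\<alpha> \<beta>. \<alpha> \<in> {1..n+1} \<and> \<beta> \<in> {1..n+1} \<and> \<alpha> < \<beta> \<and> C \<alpha> = C \<beta> \<and>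
        C' = C(\<alpha> := C \<alpha> - 1, \<beta> := C \<beta> + 1))"

definition stable :: "nat \<Rightarrow> (nat \<Rightarrow> int) \<Rightarrow> bool" where
  "stable n C \<longleftrightarrow> (\<forall>\<alpha>\<in>{1..n+1}. \<forall>\<beta>\<in>{1..n+1}. \<alpha> \<noteq> \<beta> \<longrightarrow> C \<alpha> \<noteq> C \<beta>)"

definition labels_increasing :: "nat \<Rightarrow> (nat \<Rightarrow> int) \<Rightarrow> bool" where
  "labels_increasing n C \<longleftrightarrow> (\<forall>\<alpha>\<in>{1..n+1}. \<forall>\<beta>\<in>{1..n+1}. \<alpha> < \<beta> \<longrightarrow> C \<alpha> < C \<beta>)"

text \<open>p-toppleable: the final (stable) configuration reached by toppling has labels in
  increasing order. Since the final configuration is known to exist and be unique, we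
  state this as existence of a toppling sequence to a stable, increasing configuration.\<close>
definition toppleable :: "nat \<Rightarrow> (nat \<Rightarrow> int) \<Rightarrow> bool" where
  "toppleable n C \<longleftrightarrow>
     (\<exists>F. (topple_step n)\<^sup>*\<^sup>* C F \<and> stable n F \<and> labels_increasing n F)"

end

theory Submission
  imports Defs
begin

definition Nc :: "nat \<Rightarrow> (nat \<Rightarrow> int) \<Rightarrow> int \<Rightarrow> int" where
  "Nc n E x = int (card {c\<in>{1..n+1}. E c \<le> x})"

definition Inv :: "nat \<Rightarrow> (nat \<Rightarrow> int) \<Rightarrow> bool" where
  "Inv n E \<longleftrightarrow> (\<forall>c\<in>{1..n+1}. 0 \<le> E c \<and> E c \<le> int n + 1) \<and>
     (\<forall>x. 0 \<le> x \<longrightarrow> x \<le> int n + 1 \<longrightarrow> Nc n E x = x \<or> Nc n E x = x + 1)"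

lemma Nc_le: "Nc n E x \<le> int n + 1"
proof -
  have "card {c\<in>{1..n+1}. E c \<le> x} \<le> card {1..n+1}" by (intro card_mono) auto
  then show ?thesis unfolding Nc_def by simp
qed

lemma Nc_two:
  assumes "a \<in> {1..n+1}" "b \<in> {1..n+1}" "a \<noteq> b" "E a = s" "E b = s"
  shows "Nc n E (s-1) + 2 \<le> Nc n E s"
proof -
  let ?S1 = "{c\<in>{1..n+1}. E c \<le> s-1}" and ?S2 = "{c\<in>{1..n+1}. E c \<le> s}"
  have d: "?S1 \<inter> {a,b} = {}" using assms by auto
  have "?S1 \<union> {a,b} \<subseteq> ?S2" using assms by auto
  then have "card (?S1 \<union> {a,b}) \<le> card ?S2" by (intro card_mono) auto
  moreover have "card (?S1 \<union> {a,b}) = card ?S1 + 2"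
    using card_Un_disjoint[of ?S1 "{a,b}"] assms d by auto
  ultimately show ?thesis unfolding Nc_def by simp
qed

lemma Nc_three:
  assumes "a \<in> {1..n+1}" "b \<in> {1..n+1}" "g \<in> {1..n+1}" "a \<noteq> b" "a \<noteq> g" "b \<noteq> g"
    "E a = s" "E b = s" "E g = s"
  shows "Nc n E (s-1) + 3 \<le> Nc n E s"
proof -
  let ?S1 = "{c\<in>{1..n+1}. E c \<le> s-1}" and ?S2 = "{c\<in>{1..n+1}. E c \<le> s}"
  have d: "?S1 \<inter> {a,b,g} = {}" using assms by auto
  have "?S1 \<union> {a,b,g} \<subseteq> ?S2" using assms by auto
  then have "card (?S1 \<union> {a,b,g}) \<le> card ?S2" by (intro card_mono) auto
  moreover have "card (?S1 \<union> {a,b,g}) = card ?S1 + 3"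
    using card_Un_disjoint[of ?S1 "{a,b,g}"] assms d by auto
  ultimately show ?thesis unfolding Nc_def by simp
qed

lemma Nc_neg:
  assumes "\<forall>c\<in>{1..n+1}. 0 \<le> E c" "x < 0"
  shows "Nc n E x = 0"
proof -
  have "{c\<in>{1..n+1}. E c \<le> x} = {}" using assms by force
  then show ?thesis unfolding Nc_def by simp
qed

lemma pair_site:
  assumes inv: "Inv n E" and a: "a \<in> {1..n+1}" and b: "b \<in> {1..n+1}" and ab: "a \<noteq> b"
    and eq: "E a = E b"
  shows "1 \<le> E a \<and> E a \<le> int n \<and> Nc n E (E a - 1) = E a - 1 \<and> Nc n E (E a) = E a + 1 \<and>
         (\<forall>g\<in>{1..n+1}. E g = E a \<longrightarrow> g = a \<or> g = b)"
proof -
  define s where "s = E a"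
  have conf: "\<forall>c\<in>{1..n+1}. 0 \<le> E c \<and> E c \<le> int n + 1"
    and nc: "\<And>x. 0 \<le> x \<Longrightarrow> x \<le> int n + 1 \<Longrightarrow> Nc n E x = x \<or> Nc n E x = x + 1"
    using inv unfolding Inv_def by auto
  have es: "E a = s" "E b = s" using s_def eq by auto
  have two: "Nc n E (s-1) + 2 \<le> Nc n E s" by (rule Nc_two[OF a b ab es])
  have s0: "0 \<le> s" "s \<le> int n + 1" using conf a s_def by auto
  have s1: "1 \<le> s"
  proof (rule ccontr)
    assume "\<not> 1 \<le> s"
    then have z: "s = 0" using s0 by simp
    then have "Nc n E (s-1) = 0" using Nc_neg[of n E "s-1"] conf by auto
    moreover have "Nc n E 0 = 0 \<or> Nc n E 0 = 1" using nc[of 0] by simp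
    ultimately show False using two z by auto
  qed
  have s2: "s \<le> int n"
  proof (rule ccontr)
    assume "\<not> s \<le> int n"
    then have z: "s = int n + 1" using s0 by simp
    have "Nc n E (int n) = int n \<or> Nc n E (int n) = int n + 1" using nc[of "int n"] by simp
    moreover have "Nc n E s \<le> int n + 1" using Nc_le by blast
    ultimately show False using two z by auto
  qed
  have c1: "Nc n E (s-1) = s-1 \<or> Nc n E (s-1) = s" using nc[of "s-1"] s1 s2 by simp
  have c2: "Nc n E s = s \<or> Nc n E s = s+1" using nc[of s] s1 s2 by simp
  have e1: "Nc n E (s-1) = s-1" and e2: "Nc n E s = s+1"
    using two c1 c2 by auto
  have "\<forall>g\<in>{1..n+1}. E g = s \<longrightarrow> g = a \<or> g = b"
  proof (intro ballI impI)
    fix g assume g: "g \<in> {1..n+1}" "E g = s"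
    show "g = a \<or> g = b"
    proof (rule ccontr)
      assume "\<not> (g = a \<or> g = b)"
      then have ne: "a \<noteq> g" "b \<noteq> g" by auto
      have "Nc n E (s-1) + 3 \<le> Nc n E s" using Nc_three[OF a b g(1) ab ne es g(2)] .
      then show False using e1 e2 by simp
    qed
  qed
  then show ?thesis using s1 s2 e1 e2 s_def by auto
qed

lemma Nc_step:
  assumes a: "a \<in> {1..n+1}" and b: "b \<in> {1..n+1}" and ab: "a \<noteq> b" and ea: "E a = s" and eb: "E b = s"
  shows "Nc n (E(a := E a - 1, b := E b + 1)) x =
         Nc n E x + (if x = s - 1 then 1 else 0) - (if x = s then 1 else 0)"
proof -
  let ?E' = "E(a := E a - 1, b := E b + 1)"
  let ?S = "{c\<in>{1..n+1}. E c \<le> x}" and ?S' = "{c\<in>{1..n+1}. ?E' c \<le> x}"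
  have upd: "\<And>c. ?E' c = (if c = a then s - 1 else if c = b then s + 1 else E c)"
    using ab ea eb by auto
  consider "x = s - 1" | "x = s" | "x \<noteq> s - 1 \<and> x \<noteq> s" by blast
  then show ?thesis
  proof cases
    case 1
    have "?S' = insert a ?S"
    proof (rule set_eqI)
      fix c show "c \<in> ?S' \<longleftrightarrow> c \<in> insert a ?S"
        unfolding upd using a b ab ea eb 1 by (cases "c = a"; cases "c = b") auto
    qed
    moreover have "a \<notin> ?S" using 1 ea by auto
    ultimately show ?thesis unfolding Nc_def using 1 by simp
  next
    case 2
    have "?S' = ?S - {b}"
    proof (rule set_eqI)
      fix c show "c \<in> ?S' \<longleftrightarrow> c \<in> ?S - {b}"
        unfolding upd using a b ab ea eb 2 by (cases "c = a"; cases "c = b") auto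
    qed
    moreover have bS: "b \<in> ?S" using 2 eb b by auto
    ultimately have c1: "card ?S' = card ?S - 1" by simp
    have cS: "card ?S > 0" using bS by (auto simp: card_gt_0_iff)
    show ?thesis unfolding Nc_def using 2 c1 cS by (simp add: of_nat_diff)
  next
    case 3
    have "?S' = ?S"
    proof (rule set_eqI)
      fix c show "c \<in> ?S' \<longleftrightarrow> c \<in> ?S"
        unfolding upd using a b ab ea eb 3 by (cases "c = a"; cases "c = b") auto
    qed
    then show ?thesis unfolding Nc_def using 3 by simp
  qed
qed

lemma step_elim:
  assumes "topple_step n E E'"
  obtains a b where "a \<in> {1..n+1}" "b \<in> {1..n+1}" "a < b" "E a = E b"
    "E' = E(a := E a - 1, b := E b + 1)"
  using assms unfolding topple_step_def by blast

lemma step_Nc: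
  assumes inv: "Inv n E" and st: "topple_step n E E'"
  obtains a b s where "a \<in> {1..n+1}" "b \<in> {1..n+1}" "a < b" "E a = s" "E b = s"
    "E' = E(a := s - 1, b := s + 1)" "1 \<le> s" "s \<le> int n" "Nc n E (s-1) = s - 1" "Nc n E s = s + 1"
    "\<And>x. Nc n E' x = Nc n E x + (if x = s - 1 then 1 else 0) - (if x = s then 1 else 0)"
proof -
  obtain a b where ab: "a \<in> {1..n+1}" "b \<in> {1..n+1}" "a < b" "E a = E b"
    "E' = E(a := E a - 1, b := E b + 1)" using step_elim[OF st] by blast
  have ne: "a \<noteq> b" using ab(3) by simp
  have ps: "1 \<le> E a \<and> E a \<le> int n \<and> Nc n E (E a - 1) = E a - 1 \<and> Nc n E (E a) = E a + 1"
    using pair_site[OF inv ab(1,2) ne ab(4)] by blast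
  have e': "E' = E(a := E a - 1, b := E a + 1)" using ab(4,5) by simp
  have nc: "\<And>x. Nc n E' x = Nc n E x + (if x = E a - 1 then 1 else 0) - (if x = E a then 1 else 0)"
    using Nc_step[OF ab(1,2) ne refl ab(4)[symmetric]] ab(5) by simp
  show ?thesis
    apply (rule that[OF ab(1,2,3) refl ab(4)[symmetric] e'])
    using ps nc by blast+
qed

lemma step_inv:
  assumes inv: "Inv n E" and st: "topple_step n E E'"
  shows "Inv n E'"
proof -
  obtain a b s where ab: "a \<in> {1..n+1}" "b \<in> {1..n+1}" "a < b" "E a = s" "E b = s"
    "E' = E(a := s - 1, b := s + 1)" "1 \<le> s" "s \<le> int n" "Nc n E (s-1) = s - 1" "Nc n E s = s + 1"
    and nc: "\<And>x. Nc n E' x = Nc n E x + (if x = s - 1 then 1 else 0) - (if x = s then 1 else 0)"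
    using step_Nc[OF inv st] by blast
  have conf: "\<forall>c\<in>{1..n+1}. 0 \<le> E' c \<and> E' c \<le> int n + 1"
    using inv ab unfolding Inv_def by auto
  have "\<forall>x. 0 \<le> x \<longrightarrow> x \<le> int n + 1 \<longrightarrow> Nc n E' x = x \<or> Nc n E' x = x + 1"
  proof (intro allI impI)
    fix x :: int assume x: "0 \<le> x" "x \<le> int n + 1"
    show "Nc n E' x = x \<or> Nc n E' x = x + 1"
      using nc[of x] inv x ab unfolding Inv_def by auto
  qed
  then show ?thesis using conf unfolding Inv_def by blast
qed

lemma steps_inv:
  assumes "(topple_step n)\<^sup>*\<^sup>* E F" "Inv n E"
  shows "Inv n F"
  using assms by (induction rule: rtranclp_induct) (auto intro: step_inv)

definition sq :: "nat \<Rightarrow> (nat \<Rightarrow> int) \<Rightarrow> int" where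
  "sq n E = (\<Sum>c\<in>{1..n+1}. (E c)^2)"

lemma sq_step:
  assumes a: "a \<in> {1..n+1}" and b: "b \<in> {1..n+1}" and ab: "a \<noteq> b" and ea: "E a = s" and eb: "E b = s"
  shows "sq n (E(a := s - 1, b := s + 1)) = sq n E + 2"
proof -
  let ?A = "{1..n+1::nat}"
  have "(\<Sum>c\<in>?A. ((E(a := s - 1, b := s + 1)) c)^2) =
        (\<Sum>c\<in>?A. (E c)^2 + (if c = a then 1 - 2*s else 0) + (if c = b then 1 + 2*s else 0))"
    using ab by (intro sum.cong) (auto simp: ea eb power2_eq_square algebra_simps)
  also have "\<dots> = (\<Sum>c\<in>?A. (E c)^2) + (1 - 2*s) + (1 + 2*s)"
    using a b by (simp add: sum.distrib)
  finally show ?thesis unfolding sq_def by simp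
qed

lemma sq_bound:
  assumes "Inv n E"
  shows "sq n E \<le> (int n + 1)^3"
proof -
  have "\<forall>c\<in>{1..n+1}. (E c)^2 \<le> (int n + 1)^2"
    using assms unfolding Inv_def by (auto intro!: power_mono)
  then have "sq n E \<le> of_nat (card {1..n+1}) * (int n + 1)^2"
    unfolding sq_def by (intro sum_bounded_above) auto
  then show ?thesis by (simp add: power3_eq_cube power2_eq_square algebra_simps)
qed

definition mu :: "nat \<Rightarrow> (nat \<Rightarrow> int) \<Rightarrow> nat" where
  "mu n E = nat ((int n + 1)^3 - sq n E)"

lemma mu_step:
  assumes inv: "Inv n E" and st: "topple_step n E E'"
  shows "mu n E' < mu n E"
proof -
  obtain a b where ab: "a \<in> {1..n+1}" "b \<in> {1..n+1}" "a < b" "E a = E b"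
    "E' = E(a := E a - 1, b := E b + 1)" using step_elim[OF st] by blast
  have ne: "a \<noteq> b" using ab(3) by simp
  have e': "E' = E(a := E a - 1, b := E a + 1)" using ab(4,5) by simp
  have "sq n E' = sq n E + 2" unfolding e' by (rule sq_step[OF ab(1,2) ne refl ab(4)[symmetric]])
  moreover have "sq n E' \<le> (int n + 1)^3" using sq_bound[OF step_inv[OF inv st]] .
  ultimately show ?thesis unfolding mu_def by simp
qed

lemma stable_no_step:
  assumes "stable n E" shows "\<not> topple_step n E E'"
  using assms unfolding stable_def topple_step_def by fastforce

lemma not_stable_step:
  assumes "\<not> stable n E" shows "\<exists>E'. topple_step n E E'"
proof -
  obtain a b where ab: "a \<in> {1..n+1}" "b \<in> {1..n+1}" "a \<noteq> b" "E a = E b"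
    using assms unfolding stable_def by blast
  show ?thesis
  proof (cases "a < b")
    case True
    then show ?thesis unfolding topple_step_def using ab by blast
  next
    case False
    then have "b < a" using ab by simp
    then show ?thesis unfolding topple_step_def using ab by (metis (no_types))
  qed
qed

lemma stable_steps:
  assumes "stable n E" "(topple_step n)\<^sup>*\<^sup>* E F"
  shows "F = E"
  using assms(2,1) by (induction rule: converse_rtranclp_induct) (auto dest: stable_no_step)

lemma exists_stable:
  "Inv n E \<Longrightarrow> \<exists>F. (topple_step n)\<^sup>*\<^sup>* E F \<and> stable n F"
proof (induction "mu n E" arbitrary: E rule: less_induct)
  case less
  show ?case
  proof (cases "stable n E")
    case True then show ?thesis by blast
  next
    case False
    then obtain E1 where st: "topple_step n E E1" using not_stable_step by blast
    have "Inv n E1" using step_inv[OF less.prems st] .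
    moreover have "mu n E1 < mu n E" using mu_step[OF less.prems st] .
    ultimately obtain F where "(topple_step n)\<^sup>*\<^sup>* E1 F" "stable n F" using less.hyps by blast
    then show ?thesis using st by (meson converse_rtranclp_into_rtranclp)
  qed
qed

lemma diamond:
  assumes inv: "Inv n E" and s1: "topple_step n E E1" and s2: "topple_step n E E2" and ne: "E1 \<noteq> E2"
  shows "\<exists>E3. topple_step n E1 E3 \<and> topple_step n E2 E3"
proof -
  obtain a b where ab: "a \<in> {1..n+1}" "b \<in> {1..n+1}" "a < b" "E a = E b"
    "E1 = E(a := E a - 1, b := E b + 1)" using step_elim[OF s1] by blast
  obtain a' b' where ab': "a' \<in> {1..n+1}" "b' \<in> {1..n+1}" "a' < b'" "E a' = E b'"
    "E2 = E(a' := E a' - 1, b' := E b' + 1)" using step_elim[OF s2] by blast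
  have ps: "\<forall>g\<in>{1..n+1}. E g = E a \<longrightarrow> g = a \<or> g = b"
    using pair_site[OF inv ab(1,2)] ab by auto
  have neq: "E a' \<noteq> E a"
  proof
    assume h: "E a' = E a"
    then have "a' = a \<or> a' = b" "b' = a \<or> b' = b" using ps ab' by auto
    then have "a' = a" "b' = b" using ab(3) ab'(3) by auto
    then show False using ne ab ab' by simp
  qed
  have d: "a' \<noteq> a" "a' \<noteq> b" "b' \<noteq> a" "b' \<noteq> b" using neq ab ab' by auto
  define E3 where "E3 = E(a := E a - 1, b := E b + 1, a' := E a' - 1, b' := E b' + 1)"
  have "topple_step n E1 E3"
    unfolding topple_step_def
    apply (rule exI[of _ a'], rule exI[of _ b'])
    using ab ab' d by (auto simp: E3_def)
  moreover have "topple_step n E2 E3"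
    unfolding topple_step_def
    apply (rule exI[of _ a], rule exI[of _ b])
    using ab ab' d by (auto simp: E3_def fun_eq_iff)
  ultimately show ?thesis by blast
qed

lemma unique_stable:
  "Inv n E \<Longrightarrow> (topple_step n)\<^sup>*\<^sup>* E F \<Longrightarrow> (topple_step n)\<^sup>*\<^sup>* E G \<Longrightarrow> stable n F \<Longrightarrow> stable n G
   \<Longrightarrow> F = G"
proof (induction "mu n E" arbitrary: E F G rule: less_induct)
  case less
  show ?case
  proof (cases "stable n E")
    case True
    then show ?thesis using stable_steps less.prems by metis
  next
    case False
    have "E \<noteq> F" using False less.prems by auto
    then obtain E1 where s1: "topple_step n E E1" "(topple_step n)\<^sup>*\<^sup>* E1 F"
      using less.prems(2) by (metis converse_rtranclpE)
    have "E \<noteq> G" using False less.prems by auto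
    then obtain E2 where s2: "topple_step n E E2" "(topple_step n)\<^sup>*\<^sup>* E2 G"
      using less.prems(3) by (metis converse_rtranclpE)
    have i1: "Inv n E1" "mu n E1 < mu n E"
      using step_inv[OF less.prems(1) s1(1)] mu_step[OF less.prems(1) s1(1)] by auto
    have i2: "Inv n E2" "mu n E2 < mu n E"
      using step_inv[OF less.prems(1) s2(1)] mu_step[OF less.prems(1) s2(1)] by auto
    show ?thesis
    proof (cases "E1 = E2")
      case True
      then show ?thesis using less.hyps[OF i1(2) i1(1) s1(2) _ less.prems(4,5)] s2 by auto
    next
      case False
      then obtain E3 where e3: "topple_step n E1 E3" "topple_step n E2 E3"
        using diamond[OF less.prems(1) s1(1) s2(1)] by blast
      have "Inv n E3" using step_inv[OF i1(1) e3(1)] .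
      then obtain H where h: "(topple_step n)\<^sup>*\<^sup>* E3 H" "stable n H" using exists_stable by blast
      have h1: "(topple_step n)\<^sup>*\<^sup>* E1 H" using e3(1) h(1) by (meson converse_rtranclp_into_rtranclp)
      have h2: "(topple_step n)\<^sup>*\<^sup>* E2 H" using e3(2) h(1) by (meson converse_rtranclp_into_rtranclp)
      have "F = H" using less.hyps[OF i1(2) i1(1) s1(2) h1 less.prems(4) h(2)] .
      moreover have "G = H" using less.hyps[OF i2(2) i2(1) s2(2) h2 less.prems(5) h(2)] .
      ultimately show ?thesis by simp
    qed
  qed
qed

lemma toppleable_steps:
  assumes inv: "Inv n E" and st: "(topple_step n)\<^sup>*\<^sup>* E E'"
  shows "toppleable n E \<longleftrightarrow> toppleable n E'"
proof
  assume "toppleable n E"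
  then obtain F where F: "(topple_step n)\<^sup>*\<^sup>* E F" "stable n F" "labels_increasing n F"
    unfolding toppleable_def by blast
  obtain G where G: "(topple_step n)\<^sup>*\<^sup>* E' G" "stable n G"
    using exists_stable[OF steps_inv[OF st inv]] by blast
  have "F = G" using unique_stable[OF inv F(1) rtranclp_trans[OF st G(1)] F(2) G(2)] .
  then show "toppleable n E'" unfolding toppleable_def using G F by blast
next
  assume "toppleable n E'"
  then show "toppleable n E" unfolding toppleable_def using st by (meson rtranclp_trans)
qed

lemma toppleable_stable:
  assumes "stable n E"
  shows "toppleable n E \<longleftrightarrow> labels_increasing n E"
  using stable_steps[OF assms] assms unfolding toppleable_def by blast

definition cnt :: "nat \<Rightarrow> (nat \<Rightarrow> int) \<Rightarrow> int \<Rightarrow> nat" where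
  "cnt n E t = card {c\<in>{1..n+1}. E c = t}"

definition blk :: "nat \<Rightarrow> (nat \<Rightarrow> int) \<Rightarrow> int \<Rightarrow> int \<Rightarrow> nat set" where
  "blk n E r s = {c\<in>{1..n+1}. r + 1 \<le> E c \<and> E c \<le> s}"

lemma left_pass:
  fixes n :: nat and r :: int and L :: "nat \<Rightarrow> int"
  assumes Lmono: "\<And>c c'. c < c' \<Longrightarrow> L c < L c'"
  shows "\<And>E x y s. k = nat (s - r - 1) \<Longrightarrow> r + 1 \<le> s \<Longrightarrow> x \<in> {1..n+1} \<Longrightarrow> y \<in> {1..n+1} \<Longrightarrow>
    x \<noteq> y \<Longrightarrow> E x = s \<Longrightarrow> E y = s \<Longrightarrow> (\<forall>c\<in>{1..n+1}. E c = s \<longrightarrow> c = x \<or> c = y) \<Longrightarrow>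
    (\<forall>t. r + 1 \<le> t \<longrightarrow> t \<le> s - 1 \<longrightarrow> cnt n E t = 1) \<Longrightarrow> (\<forall>c\<in>{1..n+1}. E c \<noteq> r) \<Longrightarrow>
    \<exists>E' m. (topple_step n)\<^sup>*\<^sup>* E E' \<and>
      (\<forall>c\<in>{1..n+1}. c \<notin> blk n E r s \<longrightarrow> E' c = E c) \<and>
      m \<in> blk n E r s \<and> (\<forall>c\<in>blk n E r s. m \<le> c) \<and> E' m = r \<and>
      (\<forall>c\<in>blk n E r s. c \<noteq> m \<longrightarrow> r + 2 \<le> E' c \<and> E' c \<le> s + 1) \<and>
      (\<forall>t. r + 2 \<le> t \<longrightarrow> t \<le> s + 1 \<longrightarrow> card {c\<in>blk n E r s. E' c = t} = 1) \<and>
      E' (max x y) = s + 1 \<and>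
      ((\<forall>c\<in>blk n E r s. L c \<le> E c) \<longleftrightarrow> (\<forall>c\<in>blk n E r s. c \<noteq> m \<longrightarrow> L c + 1 \<le> E' c))"
proof (induction k)
  case (0 E x y s)
  define mn where "mn = min x y"
  define mx where "mx = max x y"
  have mnmx: "mn < mx" "mn \<in> {1..n+1}" "mx \<in> {1..n+1}" "E mn = s" "E mx = s"
    "{mn, mx} = {x, y}"
    using "0.prems"(3-7) unfolding mn_def mx_def by (auto simp: min_def max_def)
  have s: "s = r + 1" using "0.prems"(1,2) by simp
  define E1 where "E1 = E(mn := s - 1, mx := s + 1)"
  have st: "topple_step n E E1"
    unfolding topple_step_def E1_def
    apply (rule exI[of _ mn], rule exI[of _ mx]) using mnmx by auto
  have only: "\<forall>c\<in>{1..n+1}. E c = s \<longrightarrow> c = mn \<or> c = mx"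
    using "0.prems"(8) mnmx(6) by blast
  have B: "blk n E r s = {mn, mx}"
  proof (rule set_eqI)
    fix c show "c \<in> blk n E r s \<longleftrightarrow> c \<in> {mn, mx}"
    proof
      assume "c \<in> blk n E r s"
      then have "c \<in> {1..n+1}" "E c = s" using s unfolding blk_def by auto
      then show "c \<in> {mn, mx}" using only by blast
    next
      assume "c \<in> {mn, mx}"
      then show "c \<in> blk n E r s" using mnmx(1-5) s unfolding blk_def by auto
    qed
  qed
  have E1v: "E1 mn = r" "E1 mx = r + 2" "\<And>c. c \<noteq> mn \<Longrightarrow> c \<noteq> mx \<Longrightarrow> E1 c = E c"
    using mnmx s unfolding E1_def by auto
  have card1: "\<forall>t. r + 2 \<le> t \<longrightarrow> t \<le> s + 1 \<longrightarrow> card {c\<in>blk n E r s. E1 c = t} = 1"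
  proof (intro allI impI)
    fix t assume "r + 2 \<le> t" "t \<le> s + 1"
    then have "t = r + 2" using s by simp
    then have "{c\<in>blk n E r s. E1 c = t} = {mx}" using B E1v by auto
    then show "card {c\<in>blk n E r s. E1 c = t} = 1" by simp
  qed
  have Lm: "L mn < L mx" using Lmono mnmx by simp
  have bnd: "(\<forall>c\<in>blk n E r s. L c \<le> E c) \<longleftrightarrow> (\<forall>c\<in>blk n E r s. c \<noteq> mn \<longrightarrow> L c + 1 \<le> E1 c)"
    unfolding B using E1v(2) mnmx(1,4,5) Lm s by auto
  have r1: "(topple_step n)\<^sup>*\<^sup>* E E1" using st by simp
  have r2: "\<forall>c\<in>{1..n+1}. c \<notin> blk n E r s \<longrightarrow> E1 c = E c" unfolding B using E1v(3) by auto
  have r3: "mn \<in> blk n E r s" "\<forall>c\<in>blk n E r s. mn \<le> c" "E1 mn = r"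
    unfolding B using mnmx(1) E1v(1) by auto
  have r4: "\<forall>c\<in>blk n E r s. c \<noteq> mn \<longrightarrow> r + 2 \<le> E1 c \<and> E1 c \<le> s + 1"
    unfolding B using E1v(2) s by auto
  have r6: "E1 (max x y) = s + 1" using E1v(2) s mx_def by simp
  show ?case using r1 r2 r3 r4 card1 r6 bnd by blast
next
  case (Suc k E x y s)
  define mn where "mn = min x y"
  define mx where "mx = max x y"
  have mnmx: "mn < mx" "mn \<in> {1..n+1}" "mx \<in> {1..n+1}" "E mn = s" "E mx = s"
    "{mn, mx} = {x, y}"
    using Suc.prems(3-7) unfolding mn_def mx_def by (auto simp: min_def max_def)
  have only: "\<forall>c\<in>{1..n+1}. E c = s \<longrightarrow> c = mn \<or> c = mx"
    using Suc.prems(8) mnmx(6) by blast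
  have sr: "r + 2 \<le> s" "k = nat (s - 1 - r - 1)" using Suc.prems(1,2) by auto
  have "cnt n E (s - 1) = 1" using Suc.prems(9) sr by simp
  then obtain y' where y': "{c\<in>{1..n+1}. E c = s - 1} = {y'}"
    unfolding cnt_def by (meson card_1_singletonE)
  have y'p: "y' \<in> {1..n+1}" "E y' = s - 1" "\<And>c. c \<in> {1..n+1} \<Longrightarrow> E c = s - 1 \<Longrightarrow> c = y'"
    using y' by blast+
  have y'ne: "y' \<noteq> mn" "y' \<noteq> mx" using y'p(2) mnmx(4,5) by auto
  define E1 where "E1 = E(mn := s - 1, mx := s + 1)"
  have st: "topple_step n E E1"
    unfolding topple_step_def E1_def
    apply (rule exI[of _ mn], rule exI[of _ mx]) using mnmx(1-5) by auto
  have E1v: "E1 mn = s - 1" "E1 mx = s + 1" "\<And>c. c \<noteq> mn \<Longrightarrow> c \<noteq> mx \<Longrightarrow> E1 c = E c"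
    using mnmx(1-5) unfolding E1_def by auto
  have h1: "mn \<noteq> y'" using y'ne by simp
  have h2: "E1 mn = s - 1" "E1 y' = s - 1" using E1v(1,3) y'ne y'p(2) by auto
  have h3: "\<forall>c\<in>{1..n+1}. E1 c = s - 1 \<longrightarrow> c = mn \<or> c = y'"
  proof (intro ballI impI)
    fix c assume c: "c \<in> {1..n+1}" "E1 c = s - 1"
    show "c = mn \<or> c = y'"
    proof (cases "c = mn \<or> c = mx")
      case True then show ?thesis using c E1v by auto
    next
      case False then show ?thesis using c E1v(3) y'p(3)[OF c(1)] by auto
    qed
  qed
  have h4: "\<forall>t. r + 1 \<le> t \<longrightarrow> t \<le> s - 1 - 1 \<longrightarrow> cnt n E1 t = 1"
  proof (intro allI impI)
    fix t assume t: "r + 1 \<le> t" "t \<le> s - 1 - 1"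
    have "{c\<in>{1..n+1}. E1 c = t} = {c\<in>{1..n+1}. E c = t}"
    proof (rule set_eqI)
      fix c show "c \<in> {c\<in>{1..n+1}. E1 c = t} \<longleftrightarrow> c \<in> {c\<in>{1..n+1}. E c = t}"
        using E1v mnmx(1-5) t by (cases "c = mn \<or> c = mx") auto
    qed
    then show "cnt n E1 t = 1" using Suc.prems(9) t unfolding cnt_def by simp
  qed
  have h5: "\<forall>c\<in>{1..n+1}. E1 c \<noteq> r"
  proof
    fix c assume c: "c \<in> {1..n+1}"
    show "E1 c \<noteq> r" using Suc.prems(10) c E1v sr by (cases "c = mn \<or> c = mx") auto
  qed
  obtain E' m where IH: "(topple_step n)\<^sup>*\<^sup>* E1 E'"
      "\<forall>c\<in>{1..n+1}. c \<notin> blk n E1 r (s - 1) \<longrightarrow> E' c = E1 c"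
      "m \<in> blk n E1 r (s - 1)" "\<forall>c\<in>blk n E1 r (s - 1). m \<le> c" "E' m = r"
      "\<forall>c\<in>blk n E1 r (s - 1). c \<noteq> m \<longrightarrow> r + 2 \<le> E' c \<and> E' c \<le> s - 1 + 1"
      "\<forall>t. r + 2 \<le> t \<longrightarrow> t \<le> s - 1 + 1 \<longrightarrow> card {c\<in>blk n E1 r (s - 1). E' c = t} = 1"
      "E' (max mn y') = s - 1 + 1"
      "(\<forall>c\<in>blk n E1 r (s - 1). L c \<le> E1 c) \<longleftrightarrow>
         (\<forall>c\<in>blk n E1 r (s - 1). c \<noteq> m \<longrightarrow> L c + 1 \<le> E' c)"
    using Suc.IH[OF sr(2) _ mnmx(2) y'p(1) h1 h2 h3 h4 h5] sr by auto
  define B where "B = blk n E r s"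
  define B1 where "B1 = blk n E1 r (s - 1)"
  have B1B: "B1 = B - {mx}"
  proof (rule set_eqI)
    fix c show "c \<in> B1 \<longleftrightarrow> c \<in> B - {mx}"
    proof (cases "c = mn \<or> c = mx")
      case True then show ?thesis using E1v mnmx(1-5) sr unfolding B1_def B_def blk_def by auto
    next
      case False
      then have "c \<in> {1..n+1} \<Longrightarrow> E c \<noteq> s" using only by blast
      then show ?thesis using E1v False unfolding B1_def B_def blk_def by auto
    qed
  qed
  have mxB: "mx \<in> B" "mn \<in> B" using mnmx(1-5) sr unfolding B_def blk_def by auto
  have BB1: "B = insert mx B1" using B1B mxB by auto
  have mB1: "m \<in> B1" "\<forall>c\<in>B1. m \<le> c" using IH(3,4) unfolding B1_def by auto
  have mnB1: "mn \<in> B1" using B1B mxB mnmx(1-5) by auto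
  have mlt: "m < mx" using mB1 mnB1 mnmx(1-5) by force
  have mxnot: "mx \<notin> B1" using B1B by auto
  have E'mx: "E' mx = s + 1" using IH(2) mxnot mnmx(1-5) E1v unfolding B1_def by auto
  have res1: "(topple_step n)\<^sup>*\<^sup>* E E'" using st IH(1) by (meson converse_rtranclp_into_rtranclp)
  have res2: "\<forall>c\<in>{1..n+1}. c \<notin> B \<longrightarrow> E' c = E c"
  proof (intro ballI impI)
    fix c assume c: "c \<in> {1..n+1}" "c \<notin> B"
    then have "c \<noteq> mn" "c \<noteq> mx" using mxB by auto
    moreover have "c \<notin> B1" using c B1B by auto
    ultimately show "E' c = E c" using IH(2) c E1v unfolding B1_def by auto
  qed
  have res3: "m \<in> B" "\<forall>c\<in>B. m \<le> c" using mB1 BB1 mlt by auto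
  have res4: "\<forall>c\<in>B. c \<noteq> m \<longrightarrow> r + 2 \<le> E' c \<and> E' c \<le> s + 1"
    using IH(6) BB1 E'mx sr unfolding B1_def by auto
  have res5: "\<forall>t. r + 2 \<le> t \<longrightarrow> t \<le> s + 1 \<longrightarrow> card {c\<in>B. E' c = t} = 1"
  proof (intro allI impI)
    fix t assume t: "r + 2 \<le> t" "t \<le> s + 1"
    show "card {c\<in>B. E' c = t} = 1"
    proof (cases "t = s + 1")
      case True
      have "{c\<in>B. E' c = t} = {mx}"
      proof (rule set_eqI)
        fix c show "c \<in> {c\<in>B. E' c = t} \<longleftrightarrow> c \<in> {mx}"
        proof (cases "c = mx")
          case True then show ?thesis using E'mx \<open>t = s + 1\<close> mxB by auto
        next
          case False
          have "c \<in> B1 \<Longrightarrow> E' c \<noteq> t"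
          proof -
            assume cB1: "c \<in> B1"
            show "E' c \<noteq> t"
            proof (cases "c = m")
              case True then show ?thesis using IH(5) \<open>t = s + 1\<close> sr by simp
            next
              case False then show ?thesis using IH(6) cB1 \<open>t = s + 1\<close> unfolding B1_def by auto
            qed
          qed
          then show ?thesis using False BB1 by auto
        qed
      qed
      then show ?thesis by simp
    next
      case False
      have "{c\<in>B. E' c = t} = {c\<in>B1. E' c = t}" using BB1 E'mx False by auto
      then show ?thesis using IH(7) t False unfolding B1_def by simp
    qed
  qed
  have res6: "E' (max x y) = s + 1" using E'mx mx_def by simp
  have Lm: "L mn < L mx" using Lmono mnmx(1-5) by simp
  have res7: "(\<forall>c\<in>B. L c \<le> E c) \<longleftrightarrow> (\<forall>c\<in>B. c \<noteq> m \<longrightarrow> L c + 1 \<le> E' c)"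
  proof -
    have eqE1: "\<forall>c\<in>B1. c \<noteq> mn \<longrightarrow> E1 c = E c" using mxnot E1v(3) by metis
    have A1: "(\<forall>c\<in>B1. L c \<le> E1 c) \<longleftrightarrow> (\<forall>c\<in>B1. c \<noteq> mn \<longrightarrow> L c \<le> E c) \<and> L mn \<le> s - 1"
    proof
      assume h: "\<forall>c\<in>B1. L c \<le> E1 c"
      show "(\<forall>c\<in>B1. c \<noteq> mn \<longrightarrow> L c \<le> E c) \<and> L mn \<le> s - 1"
        using h eqE1 mnB1 E1v(1) by metis
    next
      assume h: "(\<forall>c\<in>B1. c \<noteq> mn \<longrightarrow> L c \<le> E c) \<and> L mn \<le> s - 1"
      show "\<forall>c\<in>B1. L c \<le> E1 c"
        using h eqE1 E1v(1) by metis
    qed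
    have split1: "\<And>P. (\<forall>c\<in>B1. P c) \<longleftrightarrow> P mn \<and> (\<forall>c\<in>B1. c \<noteq> mn \<longrightarrow> P c)"
      using mnB1 by auto
    have "(\<forall>c\<in>B. L c \<le> E c) \<longleftrightarrow> L mx \<le> E mx \<and> (\<forall>c\<in>B1. L c \<le> E c)"
      unfolding BB1 by simp
    also have "\<dots> \<longleftrightarrow> L mx \<le> s \<and> (L mn \<le> s \<and> (\<forall>c\<in>B1. c \<noteq> mn \<longrightarrow> L c \<le> E c))"
      using split1[of "\<lambda>c. L c \<le> E c"] mnmx(4,5) by simp
    finally have A2: "(\<forall>c\<in>B. L c \<le> E c) \<longleftrightarrow> L mx \<le> s \<and> (L mn \<le> s \<and> (\<forall>c\<in>B1. c \<noteq> mn \<longrightarrow> L c \<le> E c))" .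
    have A3: "(\<forall>c\<in>B. c \<noteq> m \<longrightarrow> L c + 1 \<le> E' c) \<longleftrightarrow>
        (\<forall>c\<in>B1. c \<noteq> m \<longrightarrow> L c + 1 \<le> E' c) \<and> L mx \<le> s"
      unfolding BB1 using mlt E'mx by auto
    have IH9: "(\<forall>c\<in>B1. L c \<le> E1 c) \<longleftrightarrow> (\<forall>c\<in>B1. c \<noteq> m \<longrightarrow> L c + 1 \<le> E' c)"
      using IH(9) unfolding B1_def .
    have key: "(L mn \<le> s \<and> L mx \<le> s) \<longleftrightarrow> (L mn \<le> s - 1 \<and> L mx \<le> s)" using Lm by auto
    show ?thesis using A1 A2 A3 IH9 key by blast
  qed
  have res3a: "m \<in> blk n E r s" and res3b: "\<forall>c\<in>blk n E r s. m \<le> c" using res3 unfolding B_def by auto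
  show ?case
    apply (rule exI[of _ E'], rule exI[of _ m])
    apply (intro conjI)
    using res1 apply assumption
    using res2 apply (simp only: B_def)
    using res3a apply assumption
    using res3b apply assumption
    using IH(5) apply assumption
    using res4 apply (simp only: B_def)
    using res5 apply (simp only: B_def)
    using res6 apply assumption
    using res7 apply (simp only: B_def)
    done
qed

lemma Nc_cnt: "Nc n E x = Nc n E (x - 1) + int (cnt n E x)"
proof -
  let ?A = "{c\<in>{1..n+1}. E c \<le> x - 1}" and ?B = "{c\<in>{1..n+1}. E c = x}"
  have "{c\<in>{1..n+1}. E c \<le> x} = ?A \<union> ?B" by auto
  moreover have "?A \<inter> ?B = {}" by auto
  moreover have "finite ?A" "finite ?B" by auto
  ultimately have "card {c\<in>{1..n+1}. E c \<le> x} = card ?A + card ?B"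
    by (simp add: card_Un_disjoint)
  then show ?thesis unfolding Nc_def cnt_def by simp
qed

definition W :: "nat \<Rightarrow> nat \<Rightarrow> nat \<Rightarrow> (nat \<Rightarrow> int) \<Rightarrow> bool" where
  "W n p r E \<longleftrightarrow> (\<forall>c\<in>{1..n+1}. c \<le> r \<longrightarrow> E c = int c - 1) \<and>
     (\<forall>c\<in>{1..n+1}. r < c \<longrightarrow> int r + 1 \<le> E c \<and> E c \<le> int n) \<and>
     (\<forall>t. int r + 1 \<le> t \<longrightarrow> t \<le> int n \<longrightarrow> cnt n E t = (if t = int p + int r then 2 else 1))"

lemma W_low: "W n p r E \<Longrightarrow> c \<in> {1..n+1} \<Longrightarrow> c \<le> r \<Longrightarrow> E c = int c - 1"
  unfolding W_def by blast

lemma W_high: "W n p r E \<Longrightarrow> c \<in> {1..n+1} \<Longrightarrow> r < c \<Longrightarrow> int r + 1 \<le> E c \<and> E c \<le> int n"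
  unfolding W_def by blast

lemma W_cnt: "W n p r E \<Longrightarrow> int r + 1 \<le> t \<Longrightarrow> t \<le> int n \<Longrightarrow>
    cnt n E t = (if t = int p + int r then 2 else 1)"
  unfolding W_def by blast

lemma cnt_W_low:
  assumes W: "W n p r E" and r: "r \<le> n + 1" and t: "0 \<le> t" "t < int r"
  shows "cnt n E t = 1"
proof -
  have "{c\<in>{1..n+1}. E c = t} = {nat t + 1}"
  proof (rule set_eqI)
    fix c show "c \<in> {c\<in>{1..n+1}. E c = t} \<longleftrightarrow> c \<in> {nat t + 1}"
    proof
      assume c: "c \<in> {c\<in>{1..n+1}. E c = t}"
      show "c \<in> {nat t + 1}"
      proof (cases "c \<le> r")
        case True
        then have "E c = int c - 1" using W_low[OF W _ True] c by auto
        then show ?thesis using c t by auto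
      next
        case False
        then have "int r + 1 \<le> E c" using W_high[OF W _ ] False c by auto
        then show ?thesis using c t by auto
      qed
    next
      assume "c \<in> {nat t + 1}"
      then have c: "c = nat t + 1" by simp
      then have "c \<le> r" "c \<in> {1..n+1}" using t r by auto
      then have "E c = int c - 1" using W_low[OF W] by auto
      then show "c \<in> {c\<in>{1..n+1}. E c = t}" using c t \<open>c \<in> {1..n+1}\<close> by auto
    qed
  qed
  then show ?thesis unfolding cnt_def by simp
qed

lemma cnt_W_zero:
  assumes W: "W n p r E" and t: "t = int r \<or> t = int n + 1"
  shows "cnt n E t = 0"
proof -
  have "{c\<in>{1..n+1}. E c = t} = {}"
  proof (rule equals0I)
    fix c assume c: "c \<in> {c\<in>{1..n+1}. E c = t}"
    show False
    proof (cases "c \<le> r")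
      case True
      then have "E c = int c - 1" using W_low[OF W _ True] c by auto
      then show ?thesis using c t True by auto
    next
      case False
      then have "int r + 1 \<le> E c \<and> E c \<le> int n" using W_high[OF W _ ] False c by auto
      then show ?thesis using c t by auto
    qed
  qed
  then show ?thesis unfolding cnt_def by simp
qed

lemma Inv_W:
  assumes W: "W n p r E" and p1: "1 \<le> p" and pr: "p + r \<le> n"
  shows "Inv n E"
proof -
  define f :: "int \<Rightarrow> int" where
    "f x = (if x < int r then x + 1 else if x < int p + int r then x else if x \<le> int n then x + 1 else x)" for x
  have conf: "\<forall>c\<in>{1..n+1}. 0 \<le> E c \<and> E c \<le> int n + 1"
  proof
    fix c assume c: "c \<in> {1..n+1}"
    show "0 \<le> E c \<and> E c \<le> int n + 1"
    proof (cases "c \<le> r")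
      case True then show ?thesis using W_low[OF W c True] pr c by auto
    next
      case False
      then have "int r + 1 \<le> E c \<and> E c \<le> int n" using W_high[OF W c] False by auto
      then show ?thesis by simp
    qed
  qed
  have main: "\<And>k. k \<le> n + 2 \<Longrightarrow> Nc n E (int k - 1) = f (int k - 1)"
  proof -
    fix k show "k \<le> n + 2 \<Longrightarrow> Nc n E (int k - 1) = f (int k - 1)"
    proof (induction k)
      case 0
      have "Nc n E (-1) = 0" using Nc_neg[of n E "-1"] conf by auto
      then show ?case unfolding f_def by simp
    next
      case (Suc k)
      define x where "x = int k"
      have x0: "0 \<le> x" "x \<le> int n + 1" using Suc.prems x_def by auto
      have IH: "Nc n E (x - 1) = f (x - 1)" using Suc x_def by auto
      have e: "Nc n E x = f (x - 1) + int (cnt n E x)" using Nc_cnt[of n E x] IH by simp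
      have "Nc n E x = f x"
      proof -
        consider "x < int r" | "x = int r" | "int r < x \<and> x < int p + int r" | "x = int p + int r"
          | "int p + int r < x \<and> x \<le> int n" | "x = int n + 1"
          using x0 pr by linarith
        then show ?thesis
        proof cases
          case 1
          then have "cnt n E x = 1" using cnt_W_low[OF W _ x0(1)] pr by auto
          then show ?thesis using e 1 unfolding f_def by auto
        next
          case 2
          then have "cnt n E x = 0" using cnt_W_zero[OF W] by auto
          then show ?thesis using e 2 p1 unfolding f_def by auto
        next
          case 3
          then have "cnt n E x = 1" using W_cnt[OF W, of x] 3 pr by auto
          then show ?thesis using e 3 p1 unfolding f_def by auto
        next
          case 4
          then have "cnt n E x = 2" using W_cnt[OF W, of x] 4 pr p1 by auto
          then show ?thesis using e 4 p1 pr unfolding f_def by auto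
        next
          case 5
          then have "cnt n E x = 1" using W_cnt[OF W, of x] 5 by auto
          then show ?thesis using e 5 p1 unfolding f_def by auto
        next
          case 6
          then have "cnt n E x = 0" using cnt_W_zero[OF W] by auto
          then show ?thesis using e 6 p1 pr unfolding f_def by auto
        qed
      qed
      then show ?case using x_def by simp
    qed
  qed
  have "\<forall>x. 0 \<le> x \<longrightarrow> x \<le> int n + 1 \<longrightarrow> Nc n E x = x \<or> Nc n E x = x + 1"
  proof (intro allI impI)
    fix x :: int assume x: "0 \<le> x" "x \<le> int n + 1"
    have "Nc n E (int (nat x + 1) - 1) = f (int (nat x + 1) - 1)" using main[of "nat x + 1"] x by auto
    then have "Nc n E x = f x" using x by simp
    then show "Nc n E x = x \<or> Nc n E x = x + 1" unfolding f_def by auto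
  qed
  then show ?thesis using conf unfolding Inv_def by blast
qed

definition Fr :: "nat \<Rightarrow> int \<Rightarrow> (nat \<Rightarrow> int) \<Rightarrow> bool" where
  "Fr n r E \<longleftrightarrow> (\<forall>x. 0 \<le> x \<longrightarrow> x \<le> r \<longrightarrow> Nc n E x = x + 1)"

lemma frozen_step:
  assumes inv: "Inv n E" and fr: "Fr n r E" and st: "topple_step n E E'"
  shows "Fr n r E' \<and> (\<forall>c\<in>{1..n+1}. E c \<le> r \<longrightarrow> E' c = E c) \<and> (\<forall>c\<in>{1..n+1}. r < E c \<longrightarrow> r < E' c)"
proof -
  obtain a b s where ab: "a \<in> {1..n+1}" "b \<in> {1..n+1}" "a < b" "E a = s" "E b = s"
    "E' = E(a := s - 1, b := s + 1)" "1 \<le> s" "s \<le> int n" "Nc n E (s-1) = s - 1" "Nc n E s = s + 1"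
    and nc: "\<And>x. Nc n E' x = Nc n E x + (if x = s - 1 then 1 else 0) - (if x = s then 1 else 0)"
    using step_Nc[OF inv st] by blast
  have sr: "r + 2 \<le> s"
  proof (rule ccontr)
    assume "\<not> r + 2 \<le> s"
    then have "s - 1 \<le> r" by simp
    then have "Nc n E (s - 1) = s - 1 + 1" using fr ab(7) unfolding Fr_def by auto
    then show False using ab(9) by simp
  qed
  have "Fr n r E'" unfolding Fr_def
  proof (intro allI impI)
    fix x assume x: "0 \<le> x" "x \<le> r"
    have "Nc n E' x = Nc n E x" using nc[of x] x sr by simp
    then show "Nc n E' x = x + 1" using fr x unfolding Fr_def by auto
  qed
  moreover have "\<forall>c\<in>{1..n+1}. E c \<le> r \<longrightarrow> E' c = E c" using ab sr by auto
  moreover have "\<forall>c\<in>{1..n+1}. r < E c \<longrightarrow> r < E' c" using ab sr by auto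
  ultimately show ?thesis by blast
qed

lemma frozen_steps:
  assumes "(topple_step n)\<^sup>*\<^sup>* E F" "Inv n E" "Fr n r E"
  shows "Inv n F \<and> Fr n r F \<and> (\<forall>c\<in>{1..n+1}. E c \<le> r \<longrightarrow> F c = E c) \<and> (\<forall>c\<in>{1..n+1}. r < E c \<longrightarrow> r < F c)"
  using assms(1)
proof (induction rule: rtranclp_induct)
  case base
  then show ?case using assms by auto
next
  case (step F G)
  have "Fr n r G \<and> (\<forall>c\<in>{1..n+1}. F c \<le> r \<longrightarrow> G c = F c) \<and> (\<forall>c\<in>{1..n+1}. r < F c \<longrightarrow> r < G c)"
    using frozen_step[of n F r G] step by blast
  moreover have "Inv n G" using step_inv step by blast
  ultimately show ?case using step by force
qed

definition Cond :: "nat \<Rightarrow> nat \<Rightarrow> nat \<Rightarrow> (nat \<Rightarrow> int) \<Rightarrow> bool" where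
  "Cond n p r E \<longleftrightarrow> (\<forall>i\<in>{r+1..n+1}. int p + int i - int n - 1 + int r \<le> E i \<and> E i \<le> int p + int i - 1)"

lemma pass_W:
  assumes W: "W n p r E" and p1: "1 \<le> p" and pr: "p + r \<le> n"
    and P_def: "P = int p + int r"
    and L_def: "L = (\<lambda>c::nat. int p + int c - int n - 1 + int r)"
  shows "\<exists>E' m. (topple_step n)\<^sup>*\<^sup>* E E' \<and>
      (\<forall>c\<in>{1..n+1}. c \<notin> blk n E (int r) P \<longrightarrow> E' c = E c) \<and>
      m \<in> blk n E (int r) P \<and> (\<forall>c\<in>blk n E (int r) P. m \<le> c) \<and> E' m = int r \<and>
      (\<forall>c\<in>blk n E (int r) P. c \<noteq> m \<longrightarrow> int r + 2 \<le> E' c \<and> E' c \<le> P + 1) \<and>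
      (\<forall>t. int r + 2 \<le> t \<longrightarrow> t \<le> P + 1 \<longrightarrow> card {c\<in>blk n E (int r) P. E' c = t} = 1) \<and>
      ((\<forall>c\<in>blk n E (int r) P. L c \<le> E c) \<longleftrightarrow> (\<forall>c\<in>blk n E (int r) P. c \<noteq> m \<longrightarrow> L c + 1 \<le> E' c))"
proof -
  have Lmono: "\<And>c c'. c < c' \<Longrightarrow> L c < L c'" unfolding L_def by simp
  have "cnt n E P = 2" using W_cnt[OF W, of P] p1 pr unfolding P_def by auto
  then obtain x y where xy: "{c\<in>{1..n+1}. E c = P} = {x, y}" "x \<noteq> y"
    unfolding cnt_def by (meson card_2_iff)
  have xyp: "x \<in> {1..n+1}" "y \<in> {1..n+1}" "E x = P" "E y = P" using xy(1) by blast+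
  have only: "\<forall>c\<in>{1..n+1}. E c = P \<longrightarrow> c = x \<or> c = y" using xy(1) by blast
  have singles: "\<forall>t. int r + 1 \<le> t \<longrightarrow> t \<le> P - 1 \<longrightarrow> cnt n E t = 1"
    using W_cnt[OF W] pr unfolding P_def by auto
  have noR: "\<forall>c\<in>{1..n+1}. E c \<noteq> int r"
  proof
    fix c assume c: "c \<in> {1..n+1}"
    show "E c \<noteq> int r"
    proof (cases "c \<le> r")
      case True then show ?thesis using W_low[OF W c True] by simp
    next
      case False then show ?thesis using W_high[OF W c] by simp
    qed
  qed
  have "int r + 1 \<le> P" using p1 unfolding P_def by simp
  from left_pass[where L=L and k="nat (P - int r - 1)" and r="int r" and n=n, OF Lmono refl this xyp(1,2) xy(2) xyp(3,4) only singles noR]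
  show ?thesis by blast
qed

lemma main_W:
  assumes p1: "1 \<le> p"
  shows "n - p - r = k \<Longrightarrow> p + r \<le> n \<Longrightarrow> W n p r E \<Longrightarrow> (toppleable n E \<longleftrightarrow> Cond n p r E)"
proof (induction k arbitrary: r E rule: less_induct)
  case (less k r E)
  note W = less.prems(3) and pr = less.prems(2)
  define P where "P = int p + int r"
  define L where "L = (\<lambda>c::nat. int p + int c - int n - 1 + int r)"
  define B where "B = blk n E (int r) P"
  obtain E' m where H: "(topple_step n)\<^sup>*\<^sup>* E E' \<and>
      (\<forall>c\<in>{1..n+1}. c \<notin> blk n E (int r) P \<longrightarrow> E' c = E c) \<and>
      m \<in> blk n E (int r) P \<and> (\<forall>c\<in>blk n E (int r) P. m \<le> c) \<and> E' m = int r \<and>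
      (\<forall>c\<in>blk n E (int r) P. c \<noteq> m \<longrightarrow> int r + 2 \<le> E' c \<and> E' c \<le> P + 1) \<and>
      (\<forall>t. int r + 2 \<le> t \<longrightarrow> t \<le> P + 1 \<longrightarrow> card {c\<in>blk n E (int r) P. E' c = t} = 1) \<and>
      ((\<forall>c\<in>blk n E (int r) P. L c \<le> E c) \<longleftrightarrow> (\<forall>c\<in>blk n E (int r) P. c \<noteq> m \<longrightarrow> L c + 1 \<le> E' c))"
    using pass_W[OF W p1 pr P_def L_def] by blast
  have st: "(topple_step n)\<^sup>*\<^sup>* E E'" using H by blast
  have unt: "\<forall>c\<in>{1..n+1}. c \<notin> B \<longrightarrow> E' c = E c" using H unfolding B_def by blast
  have mB: "m \<in> B" and mmin: "\<forall>c\<in>B. m \<le> c" and Em: "E' m = int r"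
    using H unfolding B_def by blast+
  have rng: "\<forall>c\<in>B. c \<noteq> m \<longrightarrow> int r + 2 \<le> E' c \<and> E' c \<le> P + 1" using H unfolding B_def by blast
  have crd: "\<forall>t. int r + 2 \<le> t \<longrightarrow> t \<le> P + 1 \<longrightarrow> card {c\<in>B. E' c = t} = 1" using H unfolding B_def by blast
  have bnd: "(\<forall>c\<in>B. L c \<le> E c) \<longleftrightarrow> (\<forall>c\<in>B. c \<noteq> m \<longrightarrow> L c + 1 \<le> E' c)" using H unfolding B_def by blast
  have inv: "Inv n E" using Inv_W[OF W p1 pr] .
  have tE: "toppleable n E \<longleftrightarrow> toppleable n E'" using toppleable_steps[OF inv st] .
  have Lc: "\<And>c. L c = int p + int c - int n - 1 + int r" by (simp add: L_def)
  have Bmem: "\<And>c. c \<in> B \<longleftrightarrow> c \<in> {1..n+1} \<and> int r + 1 \<le> E c \<and> E c \<le> P"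
    unfolding B_def blk_def by auto
  have Bgt: "\<And>c. c \<in> B \<Longrightarrow> r < c"
  proof (rule ccontr)
    fix c assume c: "c \<in> B" "\<not> r < c"
    then have "E c = int c - 1" using W_low[OF W] Bmem by auto
    then show False using c Bmem by auto
  qed
  have nB_low: "\<And>c. c \<in> {1..n+1} \<Longrightarrow> c \<le> r \<Longrightarrow> c \<notin> B \<and> E' c = int c - 1"
  proof -
    fix c assume c: "c \<in> {1..n+1}" "c \<le> r"
    then have "c \<notin> B" using Bgt by force
    then show "c \<notin> B \<and> E' c = int c - 1" using unt c W_low[OF W c(1) c(2)] by auto
  qed
  have nB_high: "\<And>c. c \<in> {1..n+1} \<Longrightarrow> r < c \<Longrightarrow> c \<notin> B \<Longrightarrow> P + 1 \<le> E c \<and> E c \<le> int n \<and> E' c = E c"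
  proof -
    fix c assume c: "c \<in> {1..n+1}" "r < c" "c \<notin> B"
    have "int r + 1 \<le> E c \<and> E c \<le> int n" using W_high[OF W c(1,2)] .
    then show "P + 1 \<le> E c \<and> E c \<le> int n \<and> E' c = E c" using c Bmem unt by auto
  qed
  have mgt: "r < m" using Bgt[OF mB] .
  have mA: "m \<in> {1..n+1}" using mB Bmem by auto
  have upB: "\<And>c. c \<in> B \<Longrightarrow> E c \<le> int p + int c - 1"
  proof -
    fix c assume c: "c \<in> B"
    have "r < c" using Bgt[OF c] .
    then show "E c \<le> int p + int c - 1" using c Bmem P_def by auto
  qed
  have lowNB: "\<And>c. c \<in> {1..n+1} \<Longrightarrow> r < c \<Longrightarrow> c \<notin> B \<Longrightarrow> L c + 1 \<le> E c"
  proof -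
    fix c assume c: "c \<in> {1..n+1}" "r < c" "c \<notin> B"
    then have "P + 1 \<le> E c" using nB_high by blast
    then show "L c + 1 \<le> E c" using c Lc P_def by auto
  qed
  have C1: "Cond n p r E \<Longrightarrow> m = r + 1"
  proof -
    assume cd: "Cond n p r E"
    have r1A: "r + 1 \<in> {1..n+1}" using pr by auto
    have "E (r + 1) \<le> int p + int (r + 1) - 1" using bspec[OF cd[unfolded Cond_def], of "r+1"] pr by auto
    moreover have "int r + 1 \<le> E (r + 1)" using W_high[OF W r1A] by simp
    ultimately have "r + 1 \<in> B" using Bmem r1A P_def by auto
    then show "m = r + 1" using mmin mgt by force
  qed
  have card1_eq: "\<And>S a b. card S = 1 \<Longrightarrow> a \<in> S \<Longrightarrow> b \<in> S \<Longrightarrow> a = b"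
    by (metis card_1_singletonE singletonD)
  show ?case
  proof (cases "P = int n")
    case True
    have allB: "\<And>c. c \<in> {1..n+1} \<Longrightarrow> r < c \<Longrightarrow> c \<in> B"
      using W_high[OF W] Bmem True by auto
    have E'low: "\<And>c. c \<in> {1..n+1} \<Longrightarrow> c \<le> r \<Longrightarrow> E' c = int c - 1" using nB_low by blast
    have stE': "stable n E'"
      unfolding stable_def
    proof (intro ballI impI)
      fix a b assume a: "a \<in> {1..n+1}" and b: "b \<in> {1..n+1}" and ne: "a \<noteq> b"
      show "E' a \<noteq> E' b"
      proof
        assume eq: "E' a = E' b"
        consider "a \<le> r" "b \<le> r" | "a \<le> r" "r < b" | "r < a" "b \<le> r" | "r < a" "r < b" by linarith
        then show False
        proof cases
          case 1 then show ?thesis using E'low[OF a 1(1)] E'low[OF b 1(2)] eq ne by auto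
        next
          case 2
          have "E' b \<ge> int r" using rng allB[OF b 2(2)] Em by (cases "b = m") auto
          then show ?thesis using E'low[OF a 2(1)] eq 2(1) by auto
        next
          case 3
          have "E' a \<ge> int r" using rng allB[OF a 3(1)] Em by (cases "a = m") auto
          then show ?thesis using E'low[OF b 3(2)] eq 3(2) by auto
        next
          case 4
          have aB: "a \<in> B" and bB: "b \<in> B" using allB a b 4 by auto
          show ?thesis
          proof (cases "a = m \<or> b = m")
            case True
            then show ?thesis using rng aB bB Em eq ne by auto
          next
            case False
            then have ra: "int r + 2 \<le> E' a \<and> E' a \<le> P + 1" using rng aB by auto
            then have c1: "card {c\<in>B. E' c = E' a} = 1" using crd by auto
            have i1: "a \<in> {c\<in>B. E' c = E' a}" and i2: "b \<in> {c\<in>B. E' c = E' a}" using aB bB eq by auto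
            show ?thesis using card1_eq[OF c1 i1 i2] ne by simp
          qed
        qed
      qed
    qed
    have Lc1: "\<And>c. L c + 1 = int c" using Lc True P_def by auto
    have CondIff: "Cond n p r E \<longleftrightarrow> (m = r + 1 \<and> (\<forall>c\<in>B. c \<noteq> m \<longrightarrow> int c \<le> E' c))"
    proof
      assume cd: "Cond n p r E"
      have "\<forall>c\<in>B. L c \<le> E c"
      proof
        fix c assume c: "c \<in> B"
        then have "c \<in> {r+1..n+1}" using Bgt[OF c] Bmem[of c] by auto
        then show "L c \<le> E c" using cd Lc unfolding Cond_def by auto
      qed
      then have "\<forall>c\<in>B. c \<noteq> m \<longrightarrow> L c + 1 \<le> E' c" using bnd by blast
      then show "m = r + 1 \<and> (\<forall>c\<in>B. c \<noteq> m \<longrightarrow> int c \<le> E' c)" using C1[OF cd] Lc1 by auto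
    next
      assume h: "m = r + 1 \<and> (\<forall>c\<in>B. c \<noteq> m \<longrightarrow> int c \<le> E' c)"
      then have "\<forall>c\<in>B. c \<noteq> m \<longrightarrow> L c + 1 \<le> E' c" using Lc1 by auto
      then have low: "\<forall>c\<in>B. L c \<le> E c" using bnd by blast
      show "Cond n p r E" unfolding Cond_def
      proof
        fix i assume i: "i \<in> {r+1..n+1}"
        then have iB: "i \<in> B" using allB by auto
        show "int p + int i - int n - 1 + int r \<le> E i \<and> E i \<le> int p + int i - 1"
          using low iB upB[OF iB] Lc by auto
      qed
    qed
    have SortIff: "labels_increasing n E' \<longleftrightarrow> (m = r + 1 \<and> (\<forall>c\<in>B. c \<noteq> m \<longrightarrow> int c \<le> E' c))"
    proof
      assume li: "labels_increasing n E'"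
      have m1: "m = r + 1"
      proof (rule ccontr)
        assume "m \<noteq> r + 1"
        then have lt: "r + 1 < m" using mgt by simp
        have r1: "r + 1 \<in> {1..n+1}" using pr by auto
        then have "r + 1 \<in> B" using allB by auto
        then have "int r + 2 \<le> E' (r + 1)" using rng \<open>m \<noteq> r + 1\<close> by auto
        moreover have "E' (r + 1) < E' m" using li r1 mA lt unfolding labels_increasing_def by blast
        ultimately show False using Em by simp
      qed
      have aux: "\<And>j. r + 2 + j \<le> n + 1 \<Longrightarrow> int (r + 2 + j) \<le> E' (r + 2 + j)"
      proof -
        fix j show "r + 2 + j \<le> n + 1 \<Longrightarrow> int (r + 2 + j) \<le> E' (r + 2 + j)"
        proof (induction j)
          case 0
          have "r + 2 \<in> B" using allB 0 by auto
          then show ?case using rng m1 by auto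
        next
          case (Suc j)
          have "int (r + 2 + j) \<le> E' (r + 2 + j)" using Suc by auto
          moreover have "E' (r + 2 + j) < E' (r + 2 + Suc j)"
            using li Suc.prems unfolding labels_increasing_def by auto
          ultimately show ?case by simp
        qed
      qed
      have "\<forall>c\<in>B. c \<noteq> m \<longrightarrow> int c \<le> E' c"
      proof (intro ballI impI)
        fix c assume c: "c \<in> B" "c \<noteq> m"
        then have "r + 2 \<le> c" "c \<le> n + 1" using Bgt m1 Bmem by force+
        then have e: "r + 2 + (c - (r + 2)) = c" by simp
        show "int c \<le> E' c" using aux[of "c - (r + 2)", unfolded e] \<open>c \<le> n + 1\<close> by blast
      qed
      then show "m = r + 1 \<and> (\<forall>c\<in>B. c \<noteq> m \<longrightarrow> int c \<le> E' c)" using m1 by simp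
    next
      assume h: "m = r + 1 \<and> (\<forall>c\<in>B. c \<noteq> m \<longrightarrow> int c \<le> E' c)"
      have idc: "\<And>j c. c \<in> {1..n+1} \<Longrightarrow> r + 2 \<le> c \<Longrightarrow> n + 1 \<le> c + j \<Longrightarrow> E' c = int c"
      proof -
        fix j show "\<And>c. c \<in> {1..n+1} \<Longrightarrow> r + 2 \<le> c \<Longrightarrow> n + 1 \<le> c + j \<Longrightarrow> E' c = int c"
        proof (induction j)
          case (0 c)
          then have cB: "c \<in> B" "c \<noteq> m" using allB h by auto
          then show ?case using rng h 0 True by force
        next
          case (Suc j c)
          have cB: "c \<in> B" "c \<noteq> m" using allB h Suc.prems by auto
          have ge: "int c \<le> E' c" using h cB by blast
          have le: "E' c \<le> int n + 1" using rng cB True by force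
          show ?case
          proof (rule ccontr)
            assume "E' c \<noteq> int c"
            then have gt: "int c < E' c" using ge by simp
            define t where "t = nat (E' c)"
            have t: "int t = E' c" "c < t" "t \<le> n + 1" using gt le t_def by auto
            have tA: "t \<in> {1..n+1}" using t by auto
            have "E' t = int t" using Suc.IH[OF tA] t Suc.prems by auto
            then have "E' t = E' c" using t by simp
            moreover have "t \<noteq> c" using t by simp
            ultimately show False using stE' tA Suc.prems(1) unfolding stable_def by blast
          qed
        qed
      qed
      have val: "\<And>c. c \<in> {1..n+1} \<Longrightarrow> E' c = (if c \<le> r + 1 then int c - 1 else int c)"
      proof -
        fix c assume c: "c \<in> {1..n+1}"
        show "E' c = (if c \<le> r + 1 then int c - 1 else int c)"
        proof (cases "c \<le> r")
          case True then show ?thesis using E'low[OF c] by simp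
        next
          case False
          show ?thesis
          proof (cases "c = r + 1")
            case True then show ?thesis using Em h by simp
          next
            case False
            then show ?thesis using idc[OF c, of "n+1"] \<open>\<not> c \<le> r\<close> by simp
          qed
        qed
      qed
      show "labels_increasing n E'" unfolding labels_increasing_def
      proof (intro ballI impI)
        fix a b assume a: "a \<in> {1..n+1}" and b: "b \<in> {1..n+1}" and ab: "a < b"
        show "E' a < E' b" using val[OF a] val[OF b] ab by auto
      qed
    qed
    show ?thesis using tE toppleable_stable[OF stE'] CondIff SortIff by blast
  next
    case False
    then have Pn: "P + 1 \<le> int n" using P_def pr by simp
    have prn: "p + (r + 1) \<le> n" using Pn P_def by simp
    have lowB_of: "Cond n p r E \<Longrightarrow> \<forall>c\<in>B. L c \<le> E c"
    proof
      fix c assume cd: "Cond n p r E" and c: "c \<in> B"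
      then have "c \<in> {r+1..n+1}" using Bgt[OF c] Bmem[of c] by auto
      then show "L c \<le> E c" using cd Lc unfolding Cond_def by auto
    qed
    have ge2: "\<And>c. c \<in> {1..n+1} \<Longrightarrow> r < c \<Longrightarrow> c \<noteq> m \<Longrightarrow> int r + 2 \<le> E' c"
    proof -
      fix c assume c: "c \<in> {1..n+1}" "r < c" "c \<noteq> m"
      show "int r + 2 \<le> E' c"
      proof (cases "c \<in> B")
        case True then show ?thesis using rng c by auto
      next
        case False then show ?thesis using nB_high[OF c(1,2) False] P_def p1 by auto
      qed
    qed
    show ?thesis
    proof (cases "m = r + 1")
      case True
      have W': "W n p (r+1) E'"
        unfolding W_def
      proof (intro conjI)
        show "\<forall>c\<in>{1..n+1}. c \<le> r + 1 \<longrightarrow> E' c = int c - 1"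
        proof (intro ballI impI)
        fix c assume c: "c \<in> {1..n+1}" "c \<le> r + 1"
        show "E' c = int c - 1"
        proof (cases "c \<le> r")
          case True then show ?thesis using nB_low[OF c(1) True] by simp
        next
          case False then have "c = m" using c \<open>m = r + 1\<close> by simp
          then show ?thesis using Em \<open>m = r + 1\<close> by simp
        qed
        qed
      next
        show "\<forall>c\<in>{1..n+1}. r + 1 < c \<longrightarrow> int (r + 1) + 1 \<le> E' c \<and> E' c \<le> int n"
        proof (intro ballI impI)
        fix c assume c: "c \<in> {1..n+1}" "r + 1 < c"
        show "int (r + 1) + 1 \<le> E' c \<and> E' c \<le> int n"
        proof (cases "c \<in> B")
          case True
          then have "int r + 2 \<le> E' c \<and> E' c \<le> P + 1" using rng c \<open>m = r + 1\<close> by auto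
          then show ?thesis using Pn by simp
        next
          case False
          then show ?thesis using nB_high[OF c(1) _ False] c P_def p1 by auto
        qed
        qed
      next
        show "\<forall>t. int (r + 1) + 1 \<le> t \<longrightarrow> t \<le> int n \<longrightarrow> cnt n E' t = (if t = int p + int (r + 1) then 2 else 1)"
        proof (intro allI impI)
        fix t assume t: "int (r + 1) + 1 \<le> t" "t \<le> int n"
        define S1 where "S1 = {c\<in>B. E' c = t}"
        define S2 where "S2 = {c\<in>{1..n+1}. E c = t \<and> c \<notin> B}"
        have split: "{c\<in>{1..n+1}. E' c = t} = S1 \<union> S2"
        proof (rule set_eqI)
          fix c show "c \<in> {c\<in>{1..n+1}. E' c = t} \<longleftrightarrow> c \<in> S1 \<union> S2"
          proof (cases "c \<in> B")
            case True then show ?thesis unfolding S1_def S2_def using Bmem by auto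
          next
            case False then show ?thesis unfolding S1_def S2_def using unt by auto
          qed
        qed
        have disj: "S1 \<inter> S2 = {}" unfolding S1_def S2_def by auto
        have fin: "finite S1" "finite S2" unfolding S1_def S2_def B_def blk_def by auto
        have cS1: "card S1 = (if t \<le> P + 1 then 1 else 0)"
        proof (cases "t \<le> P + 1")
          case True then show ?thesis using crd t unfolding S1_def by auto
        next
          case False
          have "S1 = {}"
          proof (rule equals0I)
            fix c assume c: "c \<in> S1"
            show False
            proof (cases "c = m")
              case True then show ?thesis using c Em t unfolding S1_def by auto
            next
              case False then show ?thesis using c rng \<open>\<not> t \<le> P + 1\<close> unfolding S1_def by force
            qed
          qed
          then show ?thesis using False by simp
        qed
        have cS2: "card S2 = (if t \<le> P then 0 else 1)"
        proof (cases "t \<le> P")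
          case True
          have "S2 = {}" using True t Bmem unfolding S2_def by auto
          then show ?thesis using True by simp
        next
          case False
          have "S2 = {c\<in>{1..n+1}. E c = t}" using False Bmem unfolding S2_def by auto
          moreover have "cnt n E t = 1" using W_cnt[OF W, of t] t False P_def by auto
          ultimately show ?thesis using False unfolding cnt_def by simp
        qed
        have "cnt n E' t = card S1 + card S2"
          unfolding cnt_def split using card_Un_disjoint[OF fin disj] .
        then show "cnt n E' t = (if t = int p + int (r + 1) then 2 else 1)"
          using cS1 cS2 t P_def by auto
        qed
      qed
      have CondEq: "Cond n p r E \<longleftrightarrow> Cond n p (r + 1) E'"
      proof
        assume cd: "Cond n p r E"
        have "\<forall>c\<in>B. c \<noteq> m \<longrightarrow> L c + 1 \<le> E' c" using bnd lowB_of[OF cd] by blast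
        then have hB: "\<And>c. c \<in> B \<Longrightarrow> c \<noteq> m \<Longrightarrow> L c + 1 \<le> E' c" by blast
        show "Cond n p (r + 1) E'" unfolding Cond_def
        proof
          fix i assume i: "i \<in> {r + 1 + 1..n + 1}"
          then have iA: "i \<in> {1..n+1}" and ri: "r < i" and im: "i \<noteq> m" using \<open>m = r + 1\<close> by auto
          show "int p + int i - int n - 1 + int (r + 1) \<le> E' i \<and> E' i \<le> int p + int i - 1"
          proof (cases "i \<in> B")
            case True
            have "E' i \<le> P + 1" using rng True im by auto
            then show ?thesis using hB[OF True im] Lc P_def i by auto
          next
            case False
            have "E' i = E i" using nB_high[OF iA ri False] by simp
            moreover have "E i \<le> int p + int i - 1" using cd i unfolding Cond_def by auto
            moreover have "L i + 1 \<le> E i" using lowNB[OF iA ri False] .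
            ultimately show ?thesis using Lc by auto
          qed
        qed
      next
        assume cd: "Cond n p (r + 1) E'"
        have "\<forall>c\<in>B. c \<noteq> m \<longrightarrow> L c + 1 \<le> E' c"
        proof (intro ballI impI)
          fix c assume c: "c \<in> B" "c \<noteq> m"
          then have "c \<in> {r + 1 + 1..n+1}" using Bgt[OF c(1)] Bmem[of c] \<open>m = r + 1\<close> by auto
          then show "L c + 1 \<le> E' c" using cd Lc unfolding Cond_def by auto
        qed
        then have lowB: "\<forall>c\<in>B. L c \<le> E c" using bnd by blast
        show "Cond n p r E" unfolding Cond_def
        proof
          fix i assume i: "i \<in> {r + 1..n + 1}"
          show "int p + int i - int n - 1 + int r \<le> E i \<and> E i \<le> int p + int i - 1"
          proof (cases "i \<in> B")
            case True then show ?thesis using lowB upB[OF True] Lc by auto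
          next
            case False
            then have "i \<noteq> r + 1" using mB \<open>m = r + 1\<close> by auto
            then have i2: "i \<in> {r + 1 + 1..n + 1}" and iA: "i \<in> {1..n+1}" and ri: "r < i" using i by auto
            have "E' i = E i" "P + 1 \<le> E i" using nB_high[OF iA ri False] by simp+
            moreover have "E' i \<le> int p + int i - 1" using cd i2 unfolding Cond_def by auto
            moreover have "L i \<le> P" using Lc P_def i by auto
            ultimately show ?thesis using Lc by auto
          qed
        qed
      qed
      have IH: "toppleable n E' \<longleftrightarrow> Cond n p (r + 1) E'"
        using less.IH[of "n - p - (r + 1)" "r + 1" E'] less.prems(1) prn W' by auto
      show ?thesis using tE IH CondEq by blast
    next
      case False
      have ncd: "\<not> Cond n p r E" using C1 False by blast
      have invE': "Inv n E'" using steps_inv[OF st inv] .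
      have char: "\<And>c x. c \<in> {1..n+1} \<Longrightarrow> x \<le> int r \<Longrightarrow>
          (E' c \<le> x \<longleftrightarrow> (c \<le> r \<and> int c \<le> x + 1) \<or> (c = m \<and> x = int r))"
      proof -
        fix c x assume c: "c \<in> {1..n+1}" and x: "x \<le> int r"
        show "E' c \<le> x \<longleftrightarrow> (c \<le> r \<and> int c \<le> x + 1) \<or> (c = m \<and> x = int r)"
        proof (cases "c \<le> r")
          case True then show ?thesis using nB_low[OF c True] mgt by auto
        next
          case False
          show ?thesis
          proof (cases "c = m")
            case True then show ?thesis using Em x \<open>\<not> c \<le> r\<close> by auto
          next
            case False
            then show ?thesis using ge2[OF c _ False] \<open>\<not> c \<le> r\<close> x by auto
          qed
        qed
      qed
      have Fr: "Fr n (int r) E'" unfolding Fr_def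
      proof (intro allI impI)
        fix x :: int assume x: "0 \<le> x" "x \<le> int r"
        show "Nc n E' x = x + 1"
        proof (cases "x = int r")
          case True
          have "{c\<in>{1..n+1}. E' c \<le> x} = insert m {1..r}"
          proof (rule set_eqI)
            fix c show "c \<in> {c\<in>{1..n+1}. E' c \<le> x} \<longleftrightarrow> c \<in> insert m {1..r}"
              using char[of c x] True mA pr by auto
          qed
          moreover have "m \<notin> {1..r}" using mgt by auto
          ultimately show ?thesis unfolding Nc_def using True by simp
        next
          case False
          have "{c\<in>{1..n+1}. E' c \<le> x} = {1..nat x + 1}"
          proof (rule set_eqI)
            fix c show "c \<in> {c\<in>{1..n+1}. E' c \<le> x} \<longleftrightarrow> c \<in> {1..nat x + 1}"
              using char[of c x] False x pr by auto
          qed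
          then show ?thesis unfolding Nc_def using x by simp
        qed
      qed
      have notT: "\<not> toppleable n E'"
      proof
        assume "toppleable n E'"
        then obtain F where F: "(topple_step n)\<^sup>*\<^sup>* E' F" "stable n F" "labels_increasing n F"
          unfolding toppleable_def by blast
        have fz: "\<forall>c\<in>{1..n+1}. E' c \<le> int r \<longrightarrow> F c = E' c"
          "\<forall>c\<in>{1..n+1}. int r < E' c \<longrightarrow> int r < F c"
          using frozen_steps[OF F(1) invE' Fr] by blast+
        have Fm: "F m = int r" using fz(1) mA Em by auto
        have r1A: "r + 1 \<in> {1..n+1}" using pr by auto
        have "int r + 2 \<le> E' (r + 1)" using ge2[OF r1A _ ] False by auto
        then have "int r < F (r + 1)" using fz(2) r1A by auto
        moreover have "r + 1 < m" using mgt False by simp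
        then have "F (r + 1) < F m" using F(3) r1A mA unfolding labels_increasing_def by blast
        ultimately show False using Fm by simp
      qed
      show ?thesis using tE notT ncd by blast
    qed
  qed
qed

lemma inS_W:
  assumes "in_S n p C"
  shows "W n p 0 C"
proof -
  have a1: "\<forall>c\<in>{1..n+1}. C c \<in> {1..int n}" and
       a2: "\<forall>s\<in>{1..n}. card {c\<in>{1..n+1}. C c = int s} = (if s = p then 2 else 1)"
    using assms unfolding in_S_def by blast+
  have "\<forall>t. int 0 + 1 \<le> t \<longrightarrow> t \<le> int n \<longrightarrow> cnt n C t = (if t = int p + int 0 then 2 else 1)"
  proof (intro allI impI)
    fix t :: int assume t: "int 0 + 1 \<le> t" "t \<le> int n"
    then have tn: "nat t \<in> {1..n}" "int (nat t) = t" by auto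
    have "card {c\<in>{1..n+1}. C c = int (nat t)} = (if nat t = p then 2 else 1)" using a2 tn(1) by blast
    moreover have "(nat t = p) = (t = int p + int 0)" using tn by auto
    ultimately show "cnt n C t = (if t = int p + int 0 then 2 else 1)" unfolding cnt_def using tn by simp
  qed
  moreover have "\<forall>c\<in>{1..n+1}. 0 < c \<longrightarrow> int 0 + 1 \<le> C c \<and> C c \<le> int n" using a1 by auto
  moreover have "\<forall>c\<in>{1..n+1}. c \<le> 0 \<longrightarrow> C c = int c - 1" by auto
  ultimately show ?thesis unfolding W_def by blast
qed

theorem theorem4p2:
  fixes n p :: nat and C :: "nat \<Rightarrow> int"
  assumes "n \<ge> 1" and "1 \<le> p" and "p \<le> n" and "in_S n p C"
  shows "toppleable n C \<longleftrightarrow>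
    (\<forall>i\<in>{1..n+1}. int p + int i - int n - 1 \<le> C i \<and> C i \<le> int p + int i - 1)"
proof -
  have "toppleable n C \<longleftrightarrow> Cond n p 0 C"
    using main_W[OF assms(2), of n 0 "n - p" C] assms(3) inS_W[OF assms(4)] by simp
  moreover have "Cond n p 0 C \<longleftrightarrow>
    (\<forall>i\<in>{1..n+1}. int p + int i - int n - 1 \<le> C i \<and> C i \<le> int p + int i - 1)"
    unfolding Cond_def by simp
  ultimately show ?thesis by blast
qed

end
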